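(* Let $[\mathbf v_1]\neq[\mathbf v_2]$ be points of $S^2/\pm1$. Choose one of the two simple (non-self-intersecting) geodesic segments in $S^2/\pm1$ from $[\mathbf v_1]$ to $[\mathbf v_2]$, lift it to a great-circle segment in $S^2$ (one of two lifts), and let $\mu\in S^3$ be the lifted rolling monodromy of rolling the moving sphere along this segment with radius ratio $\rho=3$. Then $\mu$ depends only on the ordered pair $([\mathbf v_1],[\mathbf v_2])$ and not on the choices made.
   Context: Identify $\mathbb R^3$ with $\mathrm{Im}(\mathbb H)$ and $S^3$ with unit quaternions. Rolling along a curve $\mathbf v(t)$ in $S^2$ with radius ratio $3$ is the curve $(\mathbf v(t),q(t))\in S^2\times S^3$ with $q(0)=1$, $4\dot{\mathbf v}=\boldsymbol\omega\times\mathbf v$ and $\boldsymbol\omega\cdot\mathbf v=0$, where $\boldsymbol\omega=2\dot q\bar q$; the lifted rolling monodromy is the final value of $q$. *)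

theory Defs
  imports "HOL-Analysis.Analysis" "HOL-Analysis.Cross3"
begin

text \<open>Quaternions H = R x Im(H), with Im(H) identified with R^3:
  the pair (a, u) stands for a + u_1 i + u_2 j + u_3 k.\<close>
type_synonym quat = "real \<times> (real^3)"

definition qmul :: "quat \<Rightarrow> quat \<Rightarrow> quat" where
  "qmul p q = (fst p * fst q - inner (snd p) (snd q),
               fst p *\<^sub>R snd q + fst q *\<^sub>R snd p + cross3 (snd p) (snd q))"

definition qconj :: "quat \<Rightarrow> quat" where
  "qconj q = (fst q, - snd q)"

definition qone :: quat where
  "qone = (1, 0)"

definition rolling :: "(real \<Rightarrow> real^3) \<Rightarrow> (real \<Rightarrow> quat) \<Rightarrow> bool" where
  "rolling v q \<longleftrightarrow>
     q 0 = qone \<and>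
     (\<forall>t\<in>{0..1}. norm (v t) = 1 \<and> norm (q t) = 1) \<and>
     (\<forall>t\<in>{0..1}. \<exists>v' q'.
        (v has_vector_derivative v') (at t within {0..1}) \<and>
        (q has_vector_derivative q') (at t within {0..1}) \<and>
        (let \<omega> = 2 *\<^sub>R qmul q' (qconj (q t)) in
           fst \<omega> = 0 \<and>
           4 *\<^sub>R v' = cross3 (snd \<omega>) (v t) \<and>
           inner (snd \<omega>) (v t) = 0))"

text \<open>The (minor) great-circle segment in S^2 from w1 to w2 (w2 \<noteq> \<plusminus>w1),
  parametrised proportionally to arc length on [0,1].\<close>
definition arc :: "real^3 \<Rightarrow> real^3 \<Rightarrow> real \<Rightarrow> real^3" where
  "arc w1 w2 t =
     (let \<theta> = arccos (inner w1 w2) in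
        (sin ((1 - t) * \<theta>) / sin \<theta>) *\<^sub>R w1 + (sin (t * \<theta>) / sin \<theta>) *\<^sub>R w2)"

end

theory Submission
  imports Defs
begin

lemma qmul_assoc: "qmul (qmul p q) r = qmul p (qmul q r)"
  by (simp add: qmul_def cross3_simps forall_3)

lemma qmul_conj_self: "qmul (qconj q) q = ((norm q)^2, 0)"
  by (cases q) (simp add: qmul_def qconj_def power2_norm_eq_inner cross3_simps forall_3)

lemma qmul_self_conj: "qmul q (qconj q) = ((norm q)^2, 0)"
  by (cases q) (simp add: qmul_def qconj_def power2_norm_eq_inner cross3_simps forall_3)

lemma qmul_one: "qmul p (1, 0) = p"
  by (simp add: qmul_def)

lemma qmul_skew: "fst a = 0 \<Longrightarrow> inner (qmul a x) y = - inner x (qmul a y)"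
  by (cases a, cases x, cases y) (simp add: qmul_def cross3_simps forall_3)

lemma hvd_Pair: "(f has_vector_derivative f') (at x within s) \<Longrightarrow> (g has_vector_derivative g') (at x within s) \<Longrightarrow>
  ((\<lambda>x. (f x, g x)) has_vector_derivative (f', g')) (at x within s)"
  unfolding has_vector_derivative_def by (drule (1) has_derivative_Pair) (simp add: scaleR_Pair)

lemma cross_cross_left1: "cross3 (cross3 a b) a = (a \<bullet> a) *\<^sub>R b - (a \<bullet> b) *\<^sub>R a"
  by (simp add: cross3_simps forall_3)
lemma cross_cross_left2: "cross3 (cross3 a b) b = (a \<bullet> b) *\<^sub>R b - (b \<bullet> b) *\<^sub>R a"
  by (simp add: cross3_simps forall_3)
lemma cross_cross_right: "cross3 a (cross3 b a) = (a \<bullet> a) *\<^sub>R b - (a \<bullet> b) *\<^sub>R a"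
  by (simp add: cross3_simps forall_3)

lemma G:
  fixes w1 u :: "real^3" and \<theta> :: real
  assumes nw: "norm w1 = 1" and nu: "norm u = 1" and wu: "inner w1 u = 0"
  defines "n \<equiv> cross3 w1 u"
  defines "v \<equiv> \<lambda>t. cos (t*\<theta>) *\<^sub>R w1 + sin (t*\<theta>) *\<^sub>R u"
  defines "q0 \<equiv> \<lambda>t. (cos (2*\<theta>*t), sin (2*\<theta>*t) *\<^sub>R n)"
  shows "rolling v q0 \<and> (\<forall>q. rolling v q \<longrightarrow> q 1 = q0 1)"
proof -
  have ww: "inner w1 w1 = 1" using nw by (simp add: power2_norm_eq_inner[symmetric])
  have uu: "inner u u = 1" using nu by (simp add: power2_norm_eq_inner[symmetric])
  have nn: "inner n n = 1" using norm_cross_dot[of w1 u] nw nu wu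
    by (simp add: n_def power2_norm_eq_inner)
  have nw1: "inner n w1 = 0" "inner n u = 0" unfolding n_def using dot_cross_self
    by (simp_all add: inner_commute)
  have cnw: "cross3 n w1 = u" unfolding n_def cross_cross_left1 using ww wu by simp
  have cnu: "cross3 n u = - w1" unfolding n_def cross_cross_left2 using uu wu by simp
  define a :: quat where "a = (0, (2*\<theta>) *\<^sub>R n)"
  have vv: "inner (v t) (v t) = 1" for t
    unfolding v_def using ww uu wu
    by (simp add: inner_add_left inner_add_right inner_commute power2_eq_square[symmetric])
  have nv: "norm (v t) = 1" for t using vv[of t] by (simp add: norm_eq_sqrt_inner)
  have innv: "inner n (v t) = 0" for t unfolding v_def using nw1 by (simp add: inner_add_right)
  have vd: "(v has_vector_derivative (\<theta> *\<^sub>R cross3 n (v t))) (at t within S)" for t S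
  proof -
    have "(v has_vector_derivative ((- sin (t*\<theta>) * \<theta>) *\<^sub>R w1 + (cos (t*\<theta>) * \<theta>) *\<^sub>R u)) (at t within S)"
      unfolding v_def by (auto intro!: derivative_eq_intros)
    moreover have "\<theta> *\<^sub>R cross3 n (v t) = (- sin (t*\<theta>) * \<theta>) *\<^sub>R w1 + (cos (t*\<theta>) * \<theta>) *\<^sub>R u"
      unfolding v_def by (simp add: cross_add_right cross_mult_right cnw cnu algebra_simps)
    ultimately show ?thesis by simp
  qed
  have q0d: "(q0 has_vector_derivative qmul a (q0 t)) (at t within S)" for t S
  proof -
    have "(q0 has_vector_derivative (- sin (2*\<theta>*t) * (2*\<theta>), (cos (2*\<theta>*t) * (2*\<theta>)) *\<^sub>R n)) (at t within S)"
      unfolding q0_def by (intro hvd_Pair) (auto intro!: derivative_eq_intros simp: has_real_derivative_iff_has_vector_derivative[symmetric])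
    moreover have "qmul a (q0 t) = (- sin (2*\<theta>*t) * (2*\<theta>), (cos (2*\<theta>*t) * (2*\<theta>)) *\<^sub>R n)"
      unfolding a_def q0_def qmul_def using nn by (simp add: cross_mult_left cross_mult_right)
    ultimately show ?thesis by simp
  qed
  have nq0: "norm (q0 t) = 1" for t
  proof -
    have "inner (q0 t) (q0 t) = 1" unfolding q0_def using nn
      by (simp add: power2_eq_square[symmetric])
    then show ?thesis by (simp add: norm_eq_sqrt_inner)
  qed
  have om: "2 *\<^sub>R qmul (qmul a (q0 t)) (qconj (q0 t)) = (0, (4*\<theta>) *\<^sub>R n)" for t
    unfolding qmul_assoc qmul_self_conj nq0 by (simp add: qmul_one a_def)
  have roll3: "\<exists>v' q'. (v has_vector_derivative v') (at t within {0..1}) \<and>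
        (q0 has_vector_derivative q') (at t within {0..1}) \<and>
        (let \<omega> = 2 *\<^sub>R qmul q' (qconj (q0 t)) in
           fst \<omega> = 0 \<and> 4 *\<^sub>R v' = cross3 (snd \<omega>) (v t) \<and> inner (snd \<omega>) (v t) = 0)" for t
      apply (rule exI[of _ "\<theta> *\<^sub>R cross3 n (v t)"], rule exI[of _ "qmul a (q0 t)"])
      using vd q0d om innv by (simp add: Let_def cross_mult_left cross_mult_right)
  have roll: "rolling v q0"
    unfolding rolling_def using roll3 nv nq0 by (simp add: q0_def qone_def)
  have uniq: "q 1 = q0 1" if rq: "rolling v q" for q
  proof -
    have q00: "q 0 = qone" and nq: "\<And>t. t \<in> {0..1} \<Longrightarrow> norm (q t) = 1"
      using rq unfolding rolling_def by auto
    have qd: "(q has_vector_derivative qmul a (q t)) (at t within {0..1})" if t: "t \<in> {0..1}" for t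
    proof -
      obtain v' q' where hv: "(v has_vector_derivative v') (at t within {0..1})"
        and hq: "(q has_vector_derivative q') (at t within {0..1})"
        and h1: "fst (2 *\<^sub>R qmul q' (qconj (q t))) = 0"
        and h2: "4 *\<^sub>R v' = cross3 (snd (2 *\<^sub>R qmul q' (qconj (q t)))) (v t)"
        and h3: "inner (snd (2 *\<^sub>R qmul q' (qconj (q t)))) (v t) = 0"
        using rq t unfolding rolling_def Let_def by blast
      have "v' = \<theta> *\<^sub>R cross3 n (v t)"
        using vector_derivative_unique_within_closed_interval[of 0 1 t v v' "\<theta> *\<^sub>R cross3 n (v t)"]
          hv vd t by simp
      define b where "b = snd (2 *\<^sub>R qmul q' (qconj (q t)))"
      have "b = cross3 (v t) (cross3 b (v t))"
        unfolding cross_cross_right using vv h3 by (simp add: b_def inner_commute)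
      also have "\<dots> = cross3 (v t) (cross3 ((4*\<theta>) *\<^sub>R n) (v t))"
        using h2 \<open>v' = _\<close> by (simp add: b_def cross_mult_left cross_mult_right)
      also have "\<dots> = (4*\<theta>) *\<^sub>R n"
        unfolding cross_cross_right using vv innv by (simp add: inner_commute)
      finally have "2 *\<^sub>R qmul q' (qconj (q t)) = 2 *\<^sub>R a"
        using h1 unfolding a_def b_def by (simp add: prod_eq_iff)
      then have e: "qmul q' (qconj (q t)) = a" by simp
      have "q' = qmul (qmul q' (qconj (q t))) (q t)"
        unfolding qmul_assoc qmul_conj_self nq[OF t] by (simp add: qmul_one)
      then have "q' = qmul a (q t)" using e by simp
      then show ?thesis using hq by simp
    qed
    define g where "g t = inner (q t) (q0 t)" for t
    have gd: "(g has_derivative (\<lambda>h. 0)) (at t within {0..1})" if t: "t \<in> {0..1}" for t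
    proof -
      have "(g has_vector_derivative (inner (q t) (qmul a (q0 t)) + inner (qmul a (q t)) (q0 t))) (at t within {0..1})"
        unfolding g_def by (rule bounded_bilinear.has_vector_derivative[OF bounded_bilinear_inner qd[OF t] q0d])
      moreover have "inner (q t) (qmul a (q0 t)) + inner (qmul a (q t)) (q0 t) = 0"
        using qmul_skew[of a "q t" "q0 t"] by (simp add: a_def inner_commute)
      ultimately show ?thesis by (simp add: has_vector_derivative_def)
    qed
    have "g 1 = g 0"
      using has_derivative_zero_unique[of "{0..1::real}" g 1 0] gd by simp
    also have "g 0 = 1" unfolding g_def q00 by (simp add: q0_def qone_def)
    finally have g1: "inner (q 1) (q0 1) = 1" by (simp add: g_def)
    have i1: "inner (q 1) (q 1) = 1" using nq[of 1] by (simp add: norm_eq_sqrt_inner)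
    have i2: "inner (q0 1) (q0 1) = 1" using nq0[of 1] by (simp add: norm_eq_sqrt_inner)
    have "inner (q 1 - q0 1) (q 1 - q0 1) = 0"
      using i1 i2 g1 by (simp add: inner_diff_left inner_diff_right inner_commute)
    then show ?thesis by simp
  qed
  show ?thesis using roll uniq by blast
qed

lemma arc_main:
  fixes w1 w2 :: "real^3"
  assumes nw1: "norm w1 = 1" and nw2: "norm w2 = 1" and d1: "w2 \<noteq> w1" and d2: "w2 \<noteq> - w1"
  shows "(\<exists>q. rolling (arc w1 w2) q) \<and>
    (\<forall>q. rolling (arc w1 w2) q \<longrightarrow> q 1 = (2 * (inner w1 w2)^2 - 1, (2 * inner w1 w2) *\<^sub>R cross3 w1 w2))"
proof -
  define c where "c = inner w1 w2"
  have ww: "inner w1 w1 = 1" using nw1 by (simp add: power2_norm_eq_inner[symmetric])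
  have w22: "inner w2 w2 = 1" using nw2 by (simp add: power2_norm_eq_inner[symmetric])
  have cle: "\<bar>c\<bar> \<le> 1" using Cauchy_Schwarz_ineq2[of w1 w2] nw1 nw2 by (simp add: c_def)
  have c2: "c^2 < 1"
  proof (rule ccontr)
    assume "\<not> c^2 < 1"
    then have c1: "c^2 = 1" proof - have "c^2 \<le> 1" using cle by (simp add: abs_square_le_1) then show ?thesis using \<open>\<not> c^2 < 1\<close> by linarith qed
    have "inner (w2 - c *\<^sub>R w1) (w2 - c *\<^sub>R w1) = 0"
      using ww w22 c1 by (simp add: inner_diff_left inner_diff_right inner_commute c_def power2_eq_square)
    then have "w2 = c *\<^sub>R w1" by simp
    moreover have "c = 1 \<or> c = -1" using c1 by (simp add: power2_eq_1_iff)
    ultimately show False using d1 d2 by auto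
  qed
  define \<theta> where "\<theta> = arccos c"
  have cle': "-1 \<le> c" "c \<le> 1" using cle by auto
  have cth: "cos \<theta> = c" unfolding \<theta>_def using cle' by (simp add: cos_arccos)
  define s where "s = sin \<theta>"
  have sth: "s = sqrt (1 - c^2)" unfolding s_def \<theta>_def using cle' by (simp add: sin_arccos)
  have spos: "s > 0" using c2 sth by simp
  have s2: "s^2 = 1 - c^2" using c2 sth by simp
  define u where "u = (1/s) *\<^sub>R (w2 - c *\<^sub>R w1)"
  have wu: "inner w1 u = 0" unfolding u_def using ww by (simp add: inner_diff_right c_def)
  have uu: "inner u u = 1"
  proof -
    have "inner (w2 - c *\<^sub>R w1) (w2 - c *\<^sub>R w1) = 1 - c^2"
      using ww w22 by (simp add: inner_diff_left inner_diff_right inner_commute c_def power2_eq_square)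
    then have "inner u u = (1/s)^2 * (1 - c^2)" unfolding u_def by (simp add: power2_eq_square)
    moreover have "(1/s)^2 * (1 - c^2) = 1" unfolding s2[symmetric] using spos by (simp add: power_divide)
    ultimately show ?thesis by simp
  qed
  have nu: "norm u = 1" using uu by (simp add: norm_eq_sqrt_inner)
  have arc_eq: "arc w1 w2 = (\<lambda>t. cos (t*\<theta>) *\<^sub>R w1 + sin (t*\<theta>) *\<^sub>R u)"
  proof
    fix t
    have e: "sin ((1 - t) * \<theta>) = s * cos (t*\<theta>) - c * sin (t*\<theta>)"
      using sin_diff[of \<theta> "t*\<theta>"] cth by (simp add: s_def algebra_simps)
    have k: "(s * cos (t*\<theta>) - c * sin (t*\<theta>)) / s = cos (t*\<theta>) - sin (t*\<theta>) * (1/s) * c"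
      using spos by (simp add: field_simps)
    have "cos (t*\<theta>) *\<^sub>R w1 + sin (t*\<theta>) *\<^sub>R u
        = (cos (t*\<theta>) - sin (t*\<theta>) * (1/s) * c) *\<^sub>R w1 + (sin (t*\<theta>) / s) *\<^sub>R w2"
      unfolding u_def by (simp add: scaleR_diff_right scaleR_diff_left scaleR_scaleR)
    then show "arc w1 w2 t = cos (t*\<theta>) *\<^sub>R w1 + sin (t*\<theta>) *\<^sub>R u"
      unfolding arc_def Let_def c_def[symmetric] \<theta>_def[symmetric] s_def[symmetric] e k by simp
  qed
  have G': "rolling (arc w1 w2) (\<lambda>t. (cos (2*\<theta>*t), sin (2*\<theta>*t) *\<^sub>R cross3 w1 u)) \<and>
    (\<forall>q. rolling (arc w1 w2) q \<longrightarrow> q 1 = (cos (2*\<theta>*1), sin (2*\<theta>*1) *\<^sub>R cross3 w1 u))"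
    unfolding arc_eq using G[OF nw1 nu wu, of \<theta>] by simp
  have "(cos (2*\<theta>*1), sin (2*\<theta>*1) *\<^sub>R cross3 w1 u) = (2 * c^2 - 1, (2 * c) *\<^sub>R cross3 w1 w2)"
  proof -
    have cr: "cross3 w1 u = (1/s) *\<^sub>R cross3 w1 w2"
      unfolding u_def by (simp add: cross_mult_right Cross3.right_diff_distrib)
    have "cos (2*\<theta>*1) = 2 * c^2 - 1" using cos_double_cos[of \<theta>] cth by simp
    moreover have "sin (2*\<theta>*1) *\<^sub>R cross3 w1 u = (2 * c) *\<^sub>R cross3 w1 w2"
      unfolding cr scaleR_scaleR using sin_double[of \<theta>] cth spos by (simp add: s_def[symmetric])
    ultimately show ?thesis by simp
  qed
  then show ?thesis using G' unfolding c_def by auto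
qed

theorem lemma5:
  fixes v1 v2 :: "real^3"
  assumes "norm v1 = 1" and "norm v2 = 1" and "v2 \<noteq> v1" and "v2 \<noteq> - v1"
  shows "\<exists>\<mu>. \<forall>e1 e2 :: real. e1 \<in> {1, -1} \<and> e2 \<in> {1, -1} \<longrightarrow>
           (\<exists>q. rolling (arc (e1 *\<^sub>R v1) (e2 *\<^sub>R v2)) q) \<and>
           (\<forall>q. rolling (arc (e1 *\<^sub>R v1) (e2 *\<^sub>R v2)) q \<longrightarrow> q 1 = \<mu>)"
proof (rule exI[of _ "(2 * (inner v1 v2)^2 - 1, (2 * inner v1 v2) *\<^sub>R cross3 v1 v2)"], intro allI impI)
  fix e1 e2 :: real assume e: "e1 \<in> {1, -1} \<and> e2 \<in> {1, -1}"
  then have ee: "e1 * e1 = 1" "e2 * e2 = 1" by auto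
  have n1: "norm (e1 *\<^sub>R v1) = 1" "norm (e2 *\<^sub>R v2) = 1" using e assms by auto
  have d: "e2 *\<^sub>R v2 \<noteq> e1 *\<^sub>R v1" "e2 *\<^sub>R v2 \<noteq> - (e1 *\<^sub>R v1)"
    proof -
    have a: "v2 \<noteq> v1" "v2 \<noteq> -v1" "-v2 \<noteq> v1" "-v2 \<noteq> - v1" "- v2 \<noteq> - (- v1)"
      using assms(3,4) by (metis minus_minus)+
    from e have E1: "e1 = 1 \<or> e1 = -1" and E2: "e2 = 1 \<or> e2 = -1" by auto
    show "e2 *\<^sub>R v2 \<noteq> e1 *\<^sub>R v1"
      using E1 E2 a by (elim disjE) (simp_all only: scaleR_one scaleR_minus1_left minus_minus not_False_eq_True)
    show "e2 *\<^sub>R v2 \<noteq> - (e1 *\<^sub>R v1)"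
      using E1 E2 a by (elim disjE) (simp_all only: scaleR_one scaleR_minus1_left minus_minus not_False_eq_True)
  qed
  have eq: "(2 * (inner (e1 *\<^sub>R v1) (e2 *\<^sub>R v2))^2 - 1, (2 * inner (e1 *\<^sub>R v1) (e2 *\<^sub>R v2)) *\<^sub>R cross3 (e1 *\<^sub>R v1) (e2 *\<^sub>R v2))
     = (2 * (inner v1 v2)^2 - 1, (2 * inner v1 v2) *\<^sub>R cross3 v1 v2)"
  proof -
    have "(inner (e1 *\<^sub>R v1) (e2 *\<^sub>R v2))^2 = (inner v1 v2)^2"
      using ee by (simp add: power2_eq_square algebra_simps)
    moreover have "(2 * inner (e1 *\<^sub>R v1) (e2 *\<^sub>R v2)) *\<^sub>R cross3 (e1 *\<^sub>R v1) (e2 *\<^sub>R v2) = (2 * inner v1 v2) *\<^sub>R cross3 v1 v2"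
    proof -
      have "(2 * inner (e1 *\<^sub>R v1) (e2 *\<^sub>R v2)) *\<^sub>R cross3 (e1 *\<^sub>R v1) (e2 *\<^sub>R v2)
          = (2 * inner v1 v2 * ((e1 * e1) * (e2 * e2))) *\<^sub>R cross3 v1 v2"
        by (simp add: cross_mult_left cross_mult_right mult_ac)
      then show ?thesis using ee by simp
    qed
    ultimately show ?thesis by simp
  qed
  show "(\<exists>q. rolling (arc (e1 *\<^sub>R v1) (e2 *\<^sub>R v2)) q) \<and>
           (\<forall>q. rolling (arc (e1 *\<^sub>R v1) (e2 *\<^sub>R v2)) q \<longrightarrow> q 1 = (2 * (inner v1 v2)^2 - 1, (2 * inner v1 v2) *\<^sub>R cross3 v1 v2))"
    using arc_main[OF n1 d] unfolding eq by simp
qed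

end
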